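(* Let $\mathbf v=(v_1,\dots,v_m)$ and $\mathbf k=(k_1,\dots,k_m)$ be $m$-tuples of positive integers with $2\le k_i\le v_i$ for all $i$. Define $i\sim j$ on $\{1,\dots,m\}$ if and only if $v_i=v_j$ and $k_i=k_j$, and let $R$ be a set of equivalence class representatives. Then $C(\mathbf v,\mathbf k,2)=C(\mathbf v^R,\mathbf k^R,2)$.
   Context: For $R\subseteq\{1,\dots,m\}$, $\mathbf v^R$ denotes the tuple of entries of $\mathbf v$ in positions from $R$ (in increasing order). For tuples $\mathbf v,\mathbf k$ of positive integers of the same length $p$ with $\mathbf k\le\mathbf v$ entrywise: let $X_1,\dots,X_p$ be pairwise disjoint sets with $|X_i|=v_i$; a block is a $p$-tuple $(B_1,\dots,B_p)$ with $B_i\subseteq X_i$, $|B_i|=k_i$; a $p$-tuple of sets $(T_1,\dots,T_p)$ is $(\mathbf v,\mathbf k,2)$-admissible if $T_i\subseteq X_i$, $|T_i|\le k_i$ and $\sum|T_i|=2$, and is contained in a block if $T_i\subseteq B_i$ for all $i$. A ${\rm GC}(\mathbf v,\mathbf k,2)$ is a finite family (repetitions allowed) of blocks containing every admissible tuple in at least one block; $C(\mathbf v,\mathbf k,2)$ is the minimum number of blocks. *)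

theory Defs
  imports Main
begin

text \<open>Tuples are lists (0-indexed). The ground set X_i is taken as {..< v!i}
  (the sets X_i are disjoint as they are indexed by position i).\<close>

definition is_block :: "nat list \<Rightarrow> nat list \<Rightarrow> nat set list \<Rightarrow> bool" where
  "is_block v k B \<longleftrightarrow> length B = length v \<and>
     (\<forall>i < length v. B!i \<subseteq> {..< v!i} \<and> card (B!i) = k!i)"

definition admissible2 :: "nat list \<Rightarrow> nat list \<Rightarrow> nat set list \<Rightarrow> bool" where
  "admissible2 v k T \<longleftrightarrow> length T = length v \<and>
     (\<forall>i < length v. T!i \<subseteq> {..< v!i} \<and> card (T!i) \<le> k!i) \<and>
     (\<Sum>i < length v. card (T!i)) = 2"

definition contained_in :: "nat set list \<Rightarrow> nat set list \<Rightarrow> bool" where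
  "contained_in T B \<longleftrightarrow> (\<forall>i < length T. T!i \<subseteq> B!i)"

definition is_GC2 :: "nat list \<Rightarrow> nat list \<Rightarrow> nat set list list \<Rightarrow> bool" where
  "is_GC2 v k F \<longleftrightarrow> (\<forall>B \<in> set F. is_block v k B) \<and>
     (\<forall>T. admissible2 v k T \<longrightarrow> (\<exists>B \<in> set F. contained_in T B))"

definition C2 :: "nat list \<Rightarrow> nat list \<Rightarrow> nat" where
  "C2 v k = (LEAST n. \<exists>F. is_GC2 v k F \<and> length F = n)"

end

theory Submission
  imports Defs
begin

lemma exists_GC2:
  assumes "length k = length v" and "\<forall>i < length v. k!i \<le> v!i"
  shows "\<exists>F. is_GC2 v k F"
proof -
  let ?n = "length v"
  define AT where "AT = {T. admissible2 v k T}"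
  have sub: "AT \<subseteq> {xs. set xs \<subseteq> Pow {..< sum_list v} \<and> length xs = ?n}"
  proof
    fix T assume "T \<in> AT"
    hence a: "admissible2 v k T" by (simp add: AT_def)
    have "set T \<subseteq> Pow {..< sum_list v}"
    proof
      fix X assume "X \<in> set T"
      then obtain i where i: "i < length T" "T!i = X" by (auto simp: in_set_conv_nth)
      hence "i < ?n" using a by (simp add: admissible2_def)
      hence "X \<subseteq> {..< v!i}" using a i unfolding admissible2_def by blast
      moreover have "v!i \<le> sum_list v" using \<open>i < ?n\<close> elem_le_sum_list by blast
      ultimately show "X \<in> Pow {..< sum_list v}" by auto
    qed
    thus "T \<in> {xs. set xs \<subseteq> Pow {..< sum_list v} \<and> length xs = ?n}"
      using a by (simp add: admissible2_def)
  qed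
  have fin: "finite AT" by (rule finite_subset[OF sub finite_lists_length_eq]) simp
  have ex: "\<exists>B. is_block v k B \<and> contained_in T B" if "T \<in> AT" for T
  proof -
    have a: "admissible2 v k T" using that by (simp add: AT_def)
    have "\<forall>i < ?n. \<exists>S. T!i \<subseteq> S \<and> S \<subseteq> {..< v!i} \<and> card S = k!i"
    proof (intro allI impI)
      fix i assume i: "i < ?n"
      show "\<exists>S. T!i \<subseteq> S \<and> S \<subseteq> {..< v!i} \<and> card S = k!i"
        by (rule exists_subset_between) (use a i assms(2) in \<open>auto simp: admissible2_def\<close>)
    qed
    then obtain Sf where Sf: "\<forall>i < ?n. T!i \<subseteq> Sf i \<and> Sf i \<subseteq> {..< v!i} \<and> card (Sf i) = k!i"
      by metis
    let ?B = "map Sf [0..<?n]"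
    have "is_block v k ?B" using Sf by (simp add: is_block_def)
    moreover have "contained_in T ?B" using Sf a by (simp add: contained_in_def admissible2_def)
    ultimately show ?thesis by blast
  qed
  obtain xs where xs: "set xs = AT" using finite_list[OF fin] by blast
  define F where "F = map (\<lambda>T. SOME B. is_block v k B \<and> contained_in T B) xs"
  have "is_GC2 v k F"
    unfolding is_GC2_def
  proof (intro conjI allI impI ballI)
    fix B assume "B \<in> set F"
    then obtain T where "T \<in> AT" "B = (SOME B. is_block v k B \<and> contained_in T B)"
      using xs by (auto simp: F_def)
    thus "is_block v k B" using someI_ex[OF ex] by blast
  next
    fix T assume "admissible2 v k T"
    hence T: "T \<in> AT" by (simp add: AT_def)
    let ?B = "SOME B. is_block v k B \<and> contained_in T B"
    have "?B \<in> set F" using T xs by (auto simp: F_def)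
    moreover have "contained_in T ?B" using someI_ex[OF ex[OF T]] by blast
    ultimately show "\<exists>B \<in> set F. contained_in T B" by blast
  qed
  thus ?thesis by blast
qed

lemma GC2_pullback:
  assumes F: "is_GC2 v k F"
    and f: "inj_on f {..<p}" "\<forall>j<p. f j < length v"
    and lv': "length v' = p"
    and vf: "\<forall>j<p. v'!j = v!(f j) \<and> k'!j = k!(f j)"
  shows "is_GC2 v' k' (map (\<lambda>B. map (\<lambda>j. B!(f j)) [0..<p]) F)"
  unfolding is_GC2_def
proof (intro conjI allI impI ballI)
  fix B' assume "B' \<in> set (map (\<lambda>B. map (\<lambda>j. B!(f j)) [0..<p]) F)"
  then obtain B where B: "B \<in> set F" "B' = map (\<lambda>j. B!(f j)) [0..<p]" by auto
  have "is_block v k B" using F B by (simp add: is_GC2_def)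
  thus "is_block v' k' B'" using B f vf lv' by (auto simp: is_block_def)
next
  fix T' assume a: "admissible2 v' k' T'"
  let ?n = "length v"
  let ?g = "inv_into {..<p} f"
  define T where "T = map (\<lambda>i. if i \<in> f ` {..<p} then T'!(?g i) else {}) [0..<?n]"
  have Tf: "T!(f j) = T'!j" if "j < p" for j
    using that f by (simp add: T_def inv_into_f_f)
  have "admissible2 v k T"
    unfolding admissible2_def
  proof (intro conjI allI impI)
    show "length T = ?n" by (simp add: T_def)
  next
    fix i assume i: "i < ?n"
    have "T!i \<subseteq> {..< v!i} \<and> card (T!i) \<le> k!i"
    proof (cases "i \<in> f ` {..<p}")
      case True
      then obtain j where j: "j < p" "i = f j" by auto
      thus ?thesis using Tf[OF j(1)] a vf lv' unfolding admissible2_def by auto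
    next
      case False thus ?thesis using i by (simp add: T_def)
    qed
    thus "T!i \<subseteq> {..< v!i}" "card (T!i) \<le> k!i" by auto
  next
    have "(\<Sum>i<?n. card (T!i)) = (\<Sum>i\<in>f ` {..<p}. card (T!i))"
      by (rule sum.mono_neutral_right) (use f in \<open>auto simp: T_def\<close>)
    also have "\<dots> = (\<Sum>j<p. card (T!(f j)))" by (rule sum.reindex_cong[OF f(1)]) auto
    also have "\<dots> = (\<Sum>j<p. card (T'!j))" using Tf by simp
    also have "\<dots> = 2" using a lv' by (simp add: admissible2_def)
    finally show "(\<Sum>i<?n. card (T!i)) = 2" .
  qed
  then obtain B where B: "B \<in> set F" "contained_in T B" using F by (auto simp: is_GC2_def)
  have "length T = ?n" by (simp add: T_def)
  hence "contained_in T' (map (\<lambda>j. B!(f j)) [0..<p])"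
    using B(2) Tf f a lv' by (auto simp: contained_in_def admissible2_def)
  thus "\<exists>B'\<in>set (map (\<lambda>B. map (\<lambda>j. B!(f j)) [0..<p]) F). contained_in T' B'"
    using B(1) by auto
qed

lemma pad_admissible:
  assumes lT: "length T = length v" and p: "0 < length v"
    and T: "\<forall>j < length v. T!j \<subseteq> {..< v!j}"
    and kv: "\<forall>j < length v. 2 \<le> k!j \<and> k!j \<le> v!j"
    and s: "(\<Sum>j<length v. card (T!j)) \<le> 2"
  shows "\<exists>T'. admissible2 v k T' \<and> (\<forall>j < length v. T!j \<subseteq> T'!j)"
proof -
  let ?p = "length v"
  let ?s = "\<Sum>j<?p. card (T!j)"
  define d where "d = 2 - ?s"
  have c0: "card (T!0) \<le> ?s"
    by (rule member_le_sum[where f="\<lambda>j. card (T!j)"]) (use p in auto)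
  have "\<exists>S. T!0 \<subseteq> S \<and> S \<subseteq> {..< v!0} \<and> card S = card (T!0) + d"
    by (rule exists_subset_between) (use T kv p c0 s in \<open>auto simp: d_def\<close>)
  then obtain S where S: "T!0 \<subseteq> S" "S \<subseteq> {..< v!0}" "card S = card (T!0) + d" by blast
  define T' where "T' = T[0 := S]"
  have cT': "card (T'!j) = card (T!j) + (if j = 0 then d else 0)" if "j < ?p" for j
    using that S lT p by (auto simp: T'_def)
  have "admissible2 v k T'"
    unfolding admissible2_def
  proof (intro conjI allI impI)
    show "length T' = ?p" using lT by (simp add: T'_def)
  next
    fix j assume j: "j < ?p"
    show "T'!j \<subseteq> {..< v!j}" using j S T lT by (cases "j = 0") (auto simp: T'_def)
    have "card (T!j) \<le> ?s"
      by (rule member_le_sum[where f="\<lambda>j. card (T!j)"]) (use j in auto)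
    thus "card (T'!j) \<le> k!j" using cT'[OF j] kv j s by (auto simp: d_def)
  next
    have "(\<Sum>j<?p. card (T'!j)) = (\<Sum>j<?p. card (T!j) + (if j = 0 then d else 0))"
      using cT' by simp
    also have "\<dots> = ?s + d" using p by (simp add: sum.distrib)
    finally show "(\<Sum>j<?p. card (T'!j)) = 2" using s by (simp add: d_def)
  qed
  moreover have "\<forall>j < ?p. T!j \<subseteq> T'!j"
  proof (intro allI impI)
    fix j assume "j < ?p" thus "T!j \<subseteq> T'!j" using S lT by (cases "j = 0") (auto simp: T'_def)
  qed
  ultimately show ?thesis by blast
qed

lemma GC2_expand:
  assumes F': "is_GC2 v' k' F'"
    and lv': "length v' = p"
    and kv': "\<forall>j<p. 2 \<le> k'!j \<and> k'!j \<le> v'!j"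
    and sg: "\<forall>i<length v. \<sigma> i < p \<and> v!i = v'!(\<sigma> i) \<and> k!i = k'!(\<sigma> i)"
  shows "is_GC2 v k (map (\<lambda>B. map (\<lambda>i. B!(\<sigma> i)) [0..<length v]) F')"
  unfolding is_GC2_def
proof (intro conjI allI impI ballI)
  fix B assume "B \<in> set (map (\<lambda>B. map (\<lambda>i. B!(\<sigma> i)) [0..<length v]) F')"
  then obtain B' where B: "B' \<in> set F'" "B = map (\<lambda>i. B'!(\<sigma> i)) [0..<length v]" by auto
  have "is_block v' k' B'" using F' B by (simp add: is_GC2_def)
  thus "is_block v k B" using B sg lv' by (auto simp: is_block_def)
next
  fix T assume a: "admissible2 v k T"
  let ?n = "length v"
  have n: "0 < ?n" using a by (auto simp: admissible2_def)
  have p: "0 < p" using sg n by auto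
  define T0 where "T0 = map (\<lambda>j. \<Union>i\<in>{i. i < ?n \<and> \<sigma> i = j}. T!i) [0..<p]"
  have lT0: "length T0 = length v'" using lv' by (simp add: T0_def)
  have T0sub: "\<forall>j<length v'. T0!j \<subseteq> {..< v'!j}"
  proof (intro allI impI)
    fix j assume j: "j < length v'"
    show "T0!j \<subseteq> {..< v'!j}"
    proof
      fix x assume "x \<in> T0!j"
      then obtain i where i: "i < ?n" "\<sigma> i = j" "x \<in> T!i" using j lv' by (auto simp: T0_def)
      have "T!i \<subseteq> {..< v!i}" using a i unfolding admissible2_def by blast
      thus "x \<in> {..< v'!j}" using i sg by auto
    qed
  qed
  have "(\<Sum>j<length v'. card (T0!j)) \<le> (\<Sum>j<p. \<Sum>i\<in>{i. i \<in> {..<?n} \<and> \<sigma> i = j}. card (T!i))"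
    using lv' by (auto simp: T0_def intro!: sum_mono card_UN_le)
  also have "\<dots> = (\<Sum>i<?n. card (T!i))"
    by (rule sum.group) (use sg in auto)
  also have "\<dots> = 2" using a by (simp add: admissible2_def)
  finally have s: "(\<Sum>j<length v'. card (T0!j)) \<le> 2" .
  obtain T' where T': "admissible2 v' k' T'" "\<forall>j < length v'. T0!j \<subseteq> T'!j"
    using pad_admissible[OF lT0 _ T0sub _ s, of k'] p kv' lv' by auto
  then obtain B' where B': "B' \<in> set F'" "contained_in T' B'" using F' by (auto simp: is_GC2_def)
  have "contained_in T (map (\<lambda>i. B'!(\<sigma> i)) [0..<?n])"
    unfolding contained_in_def
  proof (intro allI impI)
    fix i assume "i < length T"
    hence i: "i < ?n" using a by (simp add: admissible2_def)
    have "T!i \<subseteq> T0!(\<sigma> i)" using i sg by (auto simp: T0_def)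
    also have "\<dots> \<subseteq> T'!(\<sigma> i)" using T' i sg lv' by auto
    also have "\<dots> \<subseteq> B'!(\<sigma> i)" using B'(2) T'(1) i sg lv' by (auto simp: contained_in_def admissible2_def)
    finally show "T!i \<subseteq> map (\<lambda>i. B'!(\<sigma> i)) [0..<?n] ! i" using i by simp
  qed
  thus "\<exists>B\<in>set (map (\<lambda>B. map (\<lambda>i. B!(\<sigma> i)) [0..<?n]) F'). contained_in T B"
    using B'(1) by auto
qed

lemma C2_le:
  assumes "is_GC2 v k F" shows "C2 v k \<le> length F"
  unfolding C2_def by (rule Least_le) (use assms in blast)

lemma C2_ex:
  assumes "\<exists>F. is_GC2 v k F" shows "\<exists>F. is_GC2 v k F \<and> length F = C2 v k"
  unfolding C2_def by (rule LeastI_ex) (use assms in blast)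

theorem corollary3p14:
  fixes v k :: "nat list" and R :: "nat set"
  assumes "length k = length v"
    and "\<forall>i < length v. 2 \<le> k!i \<and> k!i \<le> v!i"
    and "R \<subseteq> {..< length v}"
    and "\<forall>i < length v. \<exists>!j. j \<in> R \<and> v!j = v!i \<and> k!j = k!i"
  shows "C2 v k = C2 (nths v R) (nths k R)"
proof -
  let ?n = "length v"
  define rs where "rs = nths [0..<?n] R"
  define p where "p = length rs"
  have vR: "nths v R = map (nth v) rs"
    unfolding rs_def by (metis map_nth nths_map)
  have kR: "nths k R = map (nth k) rs"
    unfolding rs_def by (metis assms(1) map_nth nths_map)
  have setrs: "set rs = R" using assms(3) by (force simp: rs_def set_nths)
  have drs: "distinct rs" by (simp add: rs_def)
  have rsn: "\<forall>j<p. rs!j < ?n" using setrs assms(3) p_def nth_mem by blast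
  have inj: "inj_on (\<lambda>j. rs!j) {..<p}" using drs by (auto simp: inj_on_def p_def nth_eq_iff_index_eq)
  have "\<forall>i<?n. \<exists>j. j < p \<and> v!i = v!(rs!j) \<and> k!i = k!(rs!j)"
  proof (intro allI impI)
    fix i assume "i < ?n"
    then obtain r where r: "r \<in> R" "v!r = v!i" "k!r = k!i" using assms(4) by blast
    then obtain j where "j < p" "rs!j = r" using setrs by (metis in_set_conv_nth p_def)
    thus "\<exists>j. j < p \<and> v!i = v!(rs!j) \<and> k!i = k!(rs!j)" using r by auto
  qed
  then obtain \<sigma> where sg: "\<forall>i<?n. \<sigma> i < p \<and> v!i = v!(rs!(\<sigma> i)) \<and> k!i = k!(rs!(\<sigma> i))"
    by metis
  have lvR: "length (nths v R) = p" by (simp add: vR p_def)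
  have lkR: "length (nths k R) = length (nths v R)" by (simp add: vR kR)
  have nvR: "\<forall>j<p. nths v R ! j = v!(rs!j) \<and> nths k R ! j = k!(rs!j)"
    by (simp add: vR kR p_def)
  have kvR: "\<forall>j<p. 2 \<le> nths k R ! j \<and> nths k R ! j \<le> nths v R ! j"
    using nvR rsn assms(2) by auto
  obtain F where F: "is_GC2 v k F" "length F = C2 v k"
    using C2_ex[OF exists_GC2[OF assms(1)]] assms(2) by auto
  obtain FR where FR: "is_GC2 (nths v R) (nths k R) FR" "length FR = C2 (nths v R) (nths k R)"
    using C2_ex[OF exists_GC2[OF lkR]] kvR lvR by auto
  have "is_GC2 (nths v R) (nths k R) (map (\<lambda>B. map (\<lambda>j. B!(rs!j)) [0..<p]) F)"
    by (rule GC2_pullback[OF F(1) inj rsn lvR nvR])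
  hence le1: "C2 (nths v R) (nths k R) \<le> C2 v k" using C2_le F(2) by fastforce
  have sg': "\<forall>i<?n. \<sigma> i < p \<and> v!i = nths v R ! (\<sigma> i) \<and> k!i = nths k R ! (\<sigma> i)"
    using sg nvR by auto
  have "is_GC2 v k (map (\<lambda>B. map (\<lambda>i. B!(\<sigma> i)) [0..<?n]) FR)"
    by (rule GC2_expand[OF FR(1) lvR kvR sg'])
  hence le2: "C2 v k \<le> C2 (nths v R) (nths k R)" using C2_le FR(2) by fastforce
  show ?thesis using le1 le2 by simp
qed

end
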